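(* Let $R$ be a commutative domain with field of fractions $F$, and let $A\in R^{n\times n}$ have rank $r\ge1$ with $\alpha^i\ne0$ for $i=1,\dots,r$. Let $L$ be the $n\times n$ matrix whose first $r$ columns are $(\alpha^j_{i,j})_{i=1..n,\,j=1..r}$ and whose last $n-r$ columns are the standard basis vectors $e_{r+1},\dots,e_n$; let $U$ be the $n\times n$ matrix whose first $r$ rows are $(\alpha^i_{i,j})_{i=1..r,\,j=1..n}$ and whose last $n-r$ rows are $e_{r+1}^T,\dots,e_n^T$; and let $D=\mathrm{diag}\big((\alpha^0\alpha^1)^{-1},\dots,(\alpha^{r-1}\alpha^r)^{-1},0,\dots,0\big)\in F^{n\times n}$. Let $S$ be the $n\times n$ "flipped identity" matrix (ones on the antidiagonal, zeros elsewhere). Then $A=LDU$, $L$ is an invertible lower triangular matrix, $U$ is an invertible upper triangular matrix, $V=SLS$ is an invertible upper triangular matrix, and $$SA=V\,(SD)\,U,$$ where $SD$ has at most one nonzero entry in each row and each column; i.e. this is a Bruhat decomposition of $SA$.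
   Context: For $A=(a_{i,j})\in R^{n\times n}$ and integers $k\ge1$, $1\le i,j\le n$, $\alpha^k_{i,j}$ denotes the $k\times k$ minor of $A$ formed by rows $1,\dots,k-1,i$ and columns $1,\dots,k-1,j$ (it is $0$ if $i<k$ or $j<k$). Set $\alpha^0=1$ and $\alpha^k=\alpha^k_{k,k}$. A Bruhat decomposition of a matrix $M$ is a factorization $M=VwU$ with $V,U$ nonsingular upper triangular and $w$ a (possibly weighted) permutation-type matrix, i.e. having at most one nonzero entry in each row and column. *)

theory Defs
  imports "Jordan_Normal_Form.Matrix" "Jordan_Normal_Form.Determinant" "Jordan_Normal_Form.DL_Rank"
    "HOL-Computational_Algebra.Fraction_Field"
begin

definition to_fract :: "'a::idom \<Rightarrow> 'a fract" where
  "to_fract a = Fract a 1"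

text \<open>Minor alpha^k_{i,j} with 1-based indices k, i, j (as in the paper):
  the k x k minor on rows 1..k-1,i and columns 1..k-1,j; zero if i<k or j<k.
  Matrices are 0-indexed in Jordan_Normal_Form, hence the shifts.\<close>
definition alpha :: "'a::comm_ring_1 mat \<Rightarrow> nat \<Rightarrow> nat \<Rightarrow> nat \<Rightarrow> 'a" where
  "alpha A k i j =
    (if k = 0 then 1
     else if i < k \<or> j < k then 0
     else det (mat k k (\<lambda>(p, q). A $$ (if p < k - 1 then p else i - 1,
                                       if q < k - 1 then q else j - 1))))"

definition alpha_lead :: "'a::comm_ring_1 mat \<Rightarrow> nat \<Rightarrow> 'a" where
  "alpha_lead A k = (if k = 0 then 1 else alpha A k k k)"

definition lower_triangular :: "'a::zero mat \<Rightarrow> bool" where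
  "lower_triangular M \<longleftrightarrow> (\<forall>i < dim_row M. \<forall>j < dim_col M. i < j \<longrightarrow> M $$ (i, j) = 0)"

definition perm_type :: "'a::zero mat \<Rightarrow> bool" where
  "perm_type M \<longleftrightarrow>
     (\<forall>i < dim_row M. \<forall>j1 < dim_col M. \<forall>j2 < dim_col M.
         M $$ (i, j1) \<noteq> 0 \<longrightarrow> M $$ (i, j2) \<noteq> 0 \<longrightarrow> j1 = j2) \<and>
     (\<forall>j < dim_col M. \<forall>i1 < dim_row M. \<forall>i2 < dim_row M.
         M $$ (i1, j) \<noteq> 0 \<longrightarrow> M $$ (i2, j) \<noteq> 0 \<longrightarrow> i1 = i2)"

definition L_mat :: "nat \<Rightarrow> nat \<Rightarrow> 'a::comm_ring_1 mat \<Rightarrow> 'a mat" where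
  "L_mat n r A = mat n n (\<lambda>(i, j). if j < r then alpha A (j+1) (i+1) (j+1)
                                   else if i = j then 1 else 0)"

definition U_mat :: "nat \<Rightarrow> nat \<Rightarrow> 'a::comm_ring_1 mat \<Rightarrow> 'a mat" where
  "U_mat n r A = mat n n (\<lambda>(i, j). if i < r then alpha A (i+1) (i+1) (j+1)
                                   else if i = j then 1 else 0)"

definition D_mat :: "nat \<Rightarrow> nat \<Rightarrow> 'a::idom mat \<Rightarrow> 'a fract mat" where
  "D_mat n r A = mat n n (\<lambda>(i, j). if i = j \<and> i < r
       then inverse (to_fract (alpha_lead A i * alpha_lead A (i+1))) else 0)"

definition flip_mat :: "nat \<Rightarrow> 'a::zero_neq_one mat" where
  "flip_mat n = mat n n (\<lambda>(i, j). if i + j = n - 1 then 1 else 0)"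

end

theory Submission imports Defs "Jordan_Normal_Form.DL_Rank_Submatrix" begin

lemma schur_det: fixes B :: "'b::field mat"
  assumes B: "B \<in> carrier_mat m m" and C: "C \<in> carrier_mat m p" and R: "R \<in> carrier_mat p m"
    and E: "E \<in> carrier_mat p p" and Bi: "Bi \<in> carrier_mat m m" and BBi: "B * Bi = 1\<^sub>m m"
  shows "det (four_block_mat B C R E) = det B * det (E - R * (Bi * C))"
proof -
  define X where "X = R * (Bi * C)"
  have BiC: "Bi * C \<in> carrier_mat m p" using Bi C by (rule mult_carrier_mat)
  have X: "X \<in> carrier_mat p p" unfolding X_def using R BiC by (rule mult_carrier_mat)
  define S where "S = E - X"
  have S: "S \<in> carrier_mat p p" unfolding S_def by (rule minus_carrier_mat[OF X])
  have m1: "four_block_mat B (0\<^sub>m m p) R (1\<^sub>m p) * four_block_mat (1\<^sub>m m) (Bi * C) (0\<^sub>m p m) S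
      = four_block_mat (B * 1\<^sub>m m + 0\<^sub>m m p * 0\<^sub>m p m) (B * (Bi * C) + 0\<^sub>m m p * S)
          (R * 1\<^sub>m m + 1\<^sub>m p * 0\<^sub>m p m) (R * (Bi * C) + 1\<^sub>m p * S)"
    by (rule mult_four_block_mat[OF B zero_carrier_mat R one_carrier_mat one_carrier_mat BiC zero_carrier_mat S])
  have e1: "B * 1\<^sub>m m + 0\<^sub>m m p * 0\<^sub>m p m = B"
    using B by (intro eq_matI) simp_all
  have e2: "B * (Bi * C) + 0\<^sub>m m p * S = C"
  proof -
    have "B * (Bi * C) = C" using assoc_mult_mat[OF B Bi C, symmetric] BBi C by simp
    thus ?thesis using C S by (intro eq_matI) simp_all
  qed
  have e3: "R * 1\<^sub>m m + 1\<^sub>m p * 0\<^sub>m p m = R"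
    using R by (intro eq_matI) simp_all
  have e4: "R * (Bi * C) + 1\<^sub>m p * S = E"
  proof -
    have "1\<^sub>m p * S = S" using S by simp
    thus ?thesis unfolding X_def[symmetric] S_def using X E by (intro eq_matI) simp_all
  qed
  have eq: "four_block_mat B C R E = four_block_mat B (0\<^sub>m m p) R (1\<^sub>m p) * four_block_mat (1\<^sub>m m) (Bi * C) (0\<^sub>m p m) S"
    unfolding m1 e1 e2 e3 e4 ..
  have d1: "det (four_block_mat B (0\<^sub>m m p) R (1\<^sub>m p)) = det B"
    using det_four_block_mat_upper_right_zero[OF B refl R one_carrier_mat] by simp
  have d2: "det (four_block_mat (1\<^sub>m m) (Bi * C) (0\<^sub>m p m) S) = det S"
    using det_four_block_mat_lower_left_zero[OF one_carrier_mat BiC refl S] by simp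
  have c1: "four_block_mat B (0\<^sub>m m p) R (1\<^sub>m p) \<in> carrier_mat (m+p) (m+p)"
    using B by (rule four_block_carrier_mat, simp)
  have c2: "four_block_mat (1\<^sub>m m) (Bi * C) (0\<^sub>m p m) S \<in> carrier_mat (m+p) (m+p)"
    using S by (intro four_block_carrier_mat, simp_all)
  have "det (four_block_mat B C R E) = det B * det S" unfolding eq det_mult[OF c1 c2] d1 d2 ..
  thus ?thesis unfolding S_def X_def .
qed

definition sc :: "'b::field mat \<Rightarrow> nat \<Rightarrow> 'b mat \<Rightarrow> nat \<Rightarrow> nat \<Rightarrow> 'b" where
  "sc M m Bi u v = M$$(u,v) - vec m (\<lambda>c. M$$(u,c)) \<bullet> (Bi *\<^sub>v vec m (\<lambda>c. M$$(c,v)))"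

lemma bordered_det: fixes M :: "'b::field mat"
  assumes Bi: "Bi \<in> carrier_mat m m" and BBi: "mat m m (\<lambda>(a,b). M$$(a,b)) * Bi = 1\<^sub>m m"
  shows "det (mat (m+p) (m+p) (\<lambda>(a,b). M$$(if a<m then a else x(a-m), if b<m then b else y(b-m))))
    = det (mat m m (\<lambda>(a,b). M$$(a,b))) * det (mat p p (\<lambda>(a,b). sc M m Bi (x a) (y b)))"
proof -
  define B where "B = mat m m (\<lambda>(a,b). M$$(a,b))"
  define C where "C = mat m p (\<lambda>(a,b). M$$(a, y b))"
  define R where "R = mat p m (\<lambda>(a,b). M$$(x a, b))"
  define E where "E = mat p p (\<lambda>(a,b). M$$(x a, y b))"
  have cB: "B \<in> carrier_mat m m" and cC: "C \<in> carrier_mat m p" and cR: "R \<in> carrier_mat p m"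
    and cE: "E \<in> carrier_mat p p" unfolding B_def C_def R_def E_def by auto
  have 1: "mat (m+p) (m+p) (\<lambda>(a,b). M$$(if a<m then a else x(a-m), if b<m then b else y(b-m)))
     = four_block_mat B C R E"
    by (rule eq_matI, auto simp: B_def C_def R_def E_def)
  have 2: "E - R * (Bi * C) = mat p p (\<lambda>(a,b). sc M m Bi (x a) (y b))"
  proof (rule eq_matI)
    fix a b assume a: "a < dim_row (mat p p (\<lambda>(a,b). sc M m Bi (x a) (y b)))"
      and b: "b < dim_col (mat p p (\<lambda>(a,b). sc M m Bi (x a) (y b)))"
    hence a: "a < p" and b: "b < p" by auto
    have rR: "row R a = vec m (\<lambda>c. M$$(x a,c))" using a unfolding R_def by (intro eq_vecI, auto)
    have cC': "col C b = vec m (\<lambda>c. M$$(c, y b))" using b unfolding C_def by (intro eq_vecI, auto)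
    have "(R * (Bi * C)) $$ (a,b) = row R a \<bullet> col (Bi * C) b"
      using a b cR cC Bi by (intro index_mult_mat, auto)
    also have "col (Bi * C) b = Bi *\<^sub>v col C b" by (rule col_mult2[OF Bi cC b])
    finally have "(R * (Bi * C)) $$ (a,b) = vec m (\<lambda>c. M$$(x a,c)) \<bullet> (Bi *\<^sub>v vec m (\<lambda>c. M$$(c, y b)))"
      unfolding rR cC' .
    thus "(E - R * (Bi * C)) $$ (a,b) = mat p p (\<lambda>(a,b). sc M m Bi (x a) (y b)) $$ (a,b)"
      using a b cE cR cC Bi by (simp add: sc_def E_def)
  qed (insert cE cR cC, auto)
  show ?thesis unfolding 1 2[symmetric] B_def[symmetric]
    by (rule schur_det[OF cB cC cR cE Bi], unfold B_def, rule BBi)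
qed

lemma det_2x2: fixes M :: "'b::comm_ring_1 mat"
  assumes "M \<in> carrier_mat 2 2"
  shows "det M = M$$(0,0) * M$$(1,1) - M$$(0,1) * M$$(1,0)"
proof -
  have "det M = (\<Sum>i<2. M $$ (i,0) * cofactor M i 0)"
    by (rule laplace_expansion_column[OF assms], simp)
  also have "\<dots> = M $$ (0,0) * cofactor M 0 0 + M$$(1,0) * cofactor M 1 0"
    by (simp add: numeral_2_eq_2)
  also have "cofactor M 0 0 = M$$(1,1)"
    unfolding cofactor_def using assms
    by (subst det_single, auto simp: mat_delete_def)
  also have "cofactor M 1 0 = - M$$(0,1)"
    unfolding cofactor_def using assms
    by (subst det_single, auto simp: mat_delete_def)
  finally show ?thesis by (simp add: algebra_simps)
qed

lemma det_mat0: "det (mat 0 0 f) = 1"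
  by (subst det_upper_triangular[of _ 0], auto simp: diag_mat_def)

lemma alpha_lead_det: "alpha_lead M m = det (mat m m (\<lambda>(a,b). M$$(a,b)))"
proof (cases m)
  case 0 thus ?thesis by (simp add: alpha_lead_def det_mat0)
next
  case (Suc k)
  have "mat m m (\<lambda>(p, q). M $$ (if p < m - 1 then p else m - 1, if q < m - 1 then q else m - 1))
    = mat m m (\<lambda>(a,b). M$$(a,b))"
  proof (intro eq_matI)
    fix p q assume "p < dim_row (mat m m (\<lambda>(a,b). M$$(a,b)))" "q < dim_col (mat m m (\<lambda>(a,b). M$$(a,b)))"
    hence "p < m" "q < m" by auto
    hence "(if p < m - 1 then p else m - 1) = p" "(if q < m - 1 then q else m - 1) = q" by auto
    thus "mat m m (\<lambda>(p, q). M $$ (if p < m - 1 then p else m - 1, if q < m - 1 then q else m - 1)) $$ (p, q)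
      = mat m m (\<lambda>(a,b). M$$(a,b)) $$ (p, q)" using \<open>p < m\<close> \<open>q < m\<close> by simp
  qed auto
  moreover have "alpha_lead M m = det (mat m m (\<lambda>(p, q). M $$ (if p < m - 1 then p else m - 1, if q < m - 1 then q else m - 1)))"
    unfolding alpha_lead_def alpha_def using Suc by simp
  ultimately show ?thesis by simp
qed

lemma alpha1: "1 \<le> i \<Longrightarrow> 1 \<le> j \<Longrightarrow> alpha M 1 i j = M $$ (i-1,j-1)"
  by (simp add: alpha_def det_single)

lemma DJ: fixes M :: "'b::field mat"
  assumes d: "det (mat m m (\<lambda>(a,b). M$$(a,b))) \<noteq> 0"
  shows "alpha_lead M m * alpha M (m+2) i j
     = alpha_lead M (m+1) * alpha M (m+1) i j - alpha M (m+1) i (m+1) * alpha M (m+1) (m+1) j"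
proof -
  have lead: "alpha_lead M (m+1) = alpha M (m+1) (m+1) (m+1)" by (simp add: alpha_lead_def)
  show ?thesis
  proof (cases "i < m+2 \<or> j < m+2")
    case True
    have z: "alpha M (m+2) i j = 0" using True by (simp add: alpha_def)
    consider "i < m+1" | "j < m+1" | "i = m+1" | "j = m+1" using True by linarith
    thus ?thesis
    proof cases
      case 1
      have "alpha M (m+1) i j = 0" "alpha M (m+1) i (m+1) = 0" using 1 by (simp_all add: alpha_def)
      thus ?thesis using z by simp
    next
      case 2
      have "alpha M (m+1) i j = 0" "alpha M (m+1) (m+1) j = 0" using 2 by (simp_all add: alpha_def)
      thus ?thesis using z by simp
    next
      case 3 thus ?thesis using z unfolding lead by simp
    next
      case 4 thus ?thesis using z unfolding lead by simp
    qed
  next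
    case False
    hence i: "m+2 \<le> i" and j: "m+2 \<le> j" by auto
    let ?B = "mat m m (\<lambda>(a,b). M$$(a,b))"
    have cB: "?B \<in> carrier_mat m m" by auto
    from det_non_zero_imp_unit[OF cB d, of "()"]
    obtain Bi where Bi: "Bi \<in> carrier_mat m m" and BBi: "?B * Bi = 1\<^sub>m m"
      unfolding Units_def ring_mat_def by auto
    let ?s = "sc M m Bi"
    have b1: "alpha M (m+1) u v = det ?B * ?s (u-1) (v-1)" if "m+1 \<le> u" "m+1 \<le> v" for u v
    proof -
      have "alpha M (m+1) u v = det (mat (m+1) (m+1) (\<lambda>(a,b). M$$(if a<m then a else (\<lambda>_. u-1)(a-m),
          if b<m then b else (\<lambda>_. v-1)(b-m))))"
        using that by (simp add: alpha_def)
      also have "\<dots> = det ?B * det (mat 1 1 (\<lambda>(a,b). ?s ((\<lambda>_. u-1) a) ((\<lambda>_. v-1) b)))"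
        by (rule bordered_det[OF Bi BBi])
      also have "det (mat 1 1 (\<lambda>(a,b). ?s ((\<lambda>_. u-1) a) ((\<lambda>_. v-1) b))) = ?s (u-1) (v-1)"
        by (subst det_single, auto)
      finally show ?thesis .
    qed
    define x where "x = (\<lambda>a::nat. if a = 0 then m else i-1)"
    define y where "y = (\<lambda>a::nat. if a = 0 then m else j-1)"
    have "alpha M (m+2) i j = det (mat (m+2) (m+2) (\<lambda>(a,b). M$$(if a<m then a else x(a-m),
          if b<m then b else y(b-m))))"
    proof -
      have "(\<lambda>(p, q). M $$ (if p < m+2 - 1 then p else i - 1, if q < m+2 - 1 then q else j - 1))
        = (\<lambda>(a,b). M$$(if a<m then a else x(a-m), if b<m then b else y(b-m)))"
        by (auto simp: x_def y_def fun_eq_iff)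
      thus ?thesis using i j by (simp add: alpha_def)
    qed
    also have "\<dots> = det ?B * det (mat 2 2 (\<lambda>(a,b). ?s (x a) (y b)))"
      by (rule bordered_det[OF Bi BBi])
    also have "det (mat 2 2 (\<lambda>(a,b). ?s (x a) (y b))) = ?s m m * ?s (i-1) (j-1) - ?s m (j-1) * ?s (i-1) m"
      by (subst det_2x2, auto simp: x_def y_def)
    finally have b2: "alpha M (m+2) i j = det ?B * (?s m m * ?s (i-1) (j-1) - ?s m (j-1) * ?s (i-1) m)" .
    have e0: "alpha_lead M m = det ?B" by (rule alpha_lead_det)
    have e1: "alpha_lead M (m+1) = det ?B * ?s m m" unfolding lead using b1[of "m+1" "m+1"] by simp
    have e2: "alpha M (m+1) i j = det ?B * ?s (i-1) (j-1)" using b1 i j by simp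
    have e3: "alpha M (m+1) i (m+1) = det ?B * ?s (i-1) m" using b1[of i "m+1"] i by simp
    have e4: "alpha M (m+1) (m+1) j = det ?B * ?s m (j-1)" using b1[of "m+1" j] j by simp
    have *: "\<And>d a b c e::'b. d * (d * (a * b - c * e)) = d * a * (d * b) - d * e * (d * c)"
      by (simp add: algebra_simps)
    show ?thesis unfolding b2 e0 e1 e2 e3 e4 by (rule *)
  qed
qed

lemma key: fixes d0 :: "'b::field"
  assumes n0: "d0 \<noteq> 0" and n1: "d1 \<noteq> 0" and h: "d0*b = d1*a - c * e"
  shows "a/d0 - c * e/(d0*d1) = b/d1"
proof -
  have "a/d0 - c*e/(d0*d1) = (d1*a - c*e)/(d0*d1)" using n0 n1 by (simp add: field_simps)
  also have "\<dots> = (d0*b)/(d0*d1)" using h by simp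
  also have "\<dots> = b/d1" using n0 by simp
  finally show ?thesis .
qed

lemma telescope: fixes M :: "'b::field mat"
  assumes nz: "\<forall>k\<in>{1..r}. alpha_lead M k \<noteq> 0" and i: "1 \<le> i" and j: "1 \<le> j"
  shows "m \<le> r \<Longrightarrow> M$$(i-1,j-1) - (\<Sum>k\<in>{1..m}. alpha M k i k * alpha M k k j / (alpha_lead M (k-1) * alpha_lead M k))
     = alpha M (m+1) i j / alpha_lead M m"
proof (induction m)
  case 0
  have "alpha M 1 i j = M$$(i-1,j-1)" by (rule alpha1[OF i j])
  thus ?case by (simp add: alpha_lead_def)
next
  case (Suc m)
  hence IH: "M$$(i-1,j-1) - (\<Sum>k\<in>{1..m}. alpha M k i k * alpha M k k j / (alpha_lead M (k-1) * alpha_lead M k))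
     = alpha M (m+1) i j / alpha_lead M m" by simp
  have dm: "alpha_lead M m \<noteq> 0"
  proof (cases m)
    case 0 thus ?thesis by (simp add: alpha_lead_def)
  next
    case (Suc k) thus ?thesis using nz Suc.prems by auto
  qed
  have dm1: "alpha_lead M (m+1) \<noteq> 0" using nz Suc.prems by auto
  have DJ': "alpha_lead M m * alpha M (m+2) i j
     = alpha_lead M (m+1) * alpha M (m+1) i j - alpha M (m+1) i (m+1) * alpha M (m+1) (m+1) j"
    by (rule DJ, insert dm, simp add: alpha_lead_det)
  have "(\<Sum>k\<in>{1..Suc m}. alpha M k i k * alpha M k k j / (alpha_lead M (k-1) * alpha_lead M k))
    = (\<Sum>k\<in>{1..m}. alpha M k i k * alpha M k k j / (alpha_lead M (k-1) * alpha_lead M k))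
      + alpha M (m+1) i (m+1) * alpha M (m+1) (m+1) j / (alpha_lead M m * alpha_lead M (m+1))"
    by simp
  hence "M$$(i-1,j-1) - (\<Sum>k\<in>{1..Suc m}. alpha M k i k * alpha M k k j / (alpha_lead M (k-1) * alpha_lead M k))
    = alpha M (m+1) i j / alpha_lead M m - alpha M (m+1) i (m+1) * alpha M (m+1) (m+1) j / (alpha_lead M m * alpha_lead M (m+1))"
    using IH by (simp add: algebra_simps)
  also have "\<dots> = alpha M (m+2) i j / alpha_lead M (m+1)"
    using key[OF dm dm1 DJ'] .
  finally show ?case by simp
qed

lemma pick_ins: assumes "r \<le> c" shows "p \<le> r \<Longrightarrow> pick (insert c {0..<r}) p = (if p < r then p else c)"
proof (induction p)
  case 0
  show ?case
  proof (cases "r = 0")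
    case True thus ?thesis by (auto intro: Least_equality)
  next
    case False thus ?thesis unfolding pick.simps by (intro Least_equality, auto)
  qed
next
  case (Suc p)
  hence IH: "pick (insert c {0..<r}) p = p" by simp
  show ?case unfolding pick.simps IH
    by (rule Least_equality, insert Suc.prems assms, auto)
qed

lemma card_ins: assumes "r \<le> c" "c < n" shows "card {a. a < n \<and> a \<in> insert c {0..<r}} = r + 1"
proof -
  have "{a. a < n \<and> a \<in> insert c {0..<r}} = insert c {0..<r}" using assms by auto
  thus ?thesis using assms by simp
qed

lemma alpha_rank_zero: fixes M :: "'b::field mat"
  assumes M: "M \<in> carrier_mat n n" and rk: "vec_space.rank n M = r"
    and i: "1 \<le> i" "i \<le> n" and j: "1 \<le> j" "j \<le> n"
  shows "alpha M (r+1) i j = 0"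
proof (cases "i < r+1 \<or> j < r+1")
  case True thus ?thesis by (simp add: alpha_def)
next
  case False
  define I where "I = insert (i-1) {0..<r}"
  define J where "J = insert (j-1) {0..<r}"
  have cI: "card {a. a < dim_row M \<and> a \<in> I} = r+1" unfolding I_def using M False i
    by (intro card_ins, auto)
  have cJ: "card {a. a < dim_col M \<and> a \<in> J} = r+1" unfolding J_def using M False j
    by (intro card_ins, auto)
  have cJ': "card {a. a < n \<and> a \<in> J} = r+1" using cJ M by simp
  have sub: "submatrix M I J = mat (r+1) (r+1) (\<lambda>(p, q). M $$ (if p < r+1 - 1 then p else i - 1, if q < r+1 - 1 then q else j - 1))"
  proof (rule eq_matI)
    fix p q assume p: "p < dim_row (mat (r+1) (r+1) (\<lambda>(p, q). M $$ (if p < r+1 - 1 then p else i - 1, if q < r+1 - 1 then q else j - 1)))"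
      and q: "q < dim_col (mat (r+1) (r+1) (\<lambda>(p, q). M $$ (if p < r+1 - 1 then p else i - 1, if q < r+1 - 1 then q else j - 1)))"
    hence p: "p < r+1" and q: "q < r+1" by auto
    have "submatrix M I J $$ (p,q) = M $$ (pick I p, pick J q)"
      by (rule submatrix_index, insert cI cJ p q, auto)
    also have "pick I p = (if p < r then p else i-1)" unfolding I_def using p False by (intro pick_ins, auto)
    also have "pick J q = (if q < r then q else j-1)" unfolding J_def using q False by (intro pick_ins, auto)
    finally show "submatrix M I J $$ (p,q) = mat (r+1) (r+1) (\<lambda>(p, q). M $$ (if p < r+1 - 1 then p else i - 1, if q < r+1 - 1 then q else j - 1)) $$ (p,q)"
      using p q by simp
  qed (insert cI cJ, auto simp: dim_submatrix)
  have "alpha M (r+1) i j = det (submatrix M I J)" unfolding sub using False by (simp add: alpha_def)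
  moreover have "det (submatrix M I J) = 0"
  proof (rule ccontr)
    assume "det (submatrix M I J) \<noteq> 0"
    from vec_space.rank_gt_minor[OF M this] have "card {j. j < n \<and> j \<in> J} \<le> vec_space.rank n M" .
    thus False using cJ' rk by simp
  qed
  ultimately show ?thesis by simp
qed

lemma tf_eq: "(Defs.to_fract :: 'a::idom \<Rightarrow> 'a fract) = Polynomial_Factorial.to_fract"
  by (auto simp: fun_eq_iff Defs.to_fract_def Polynomial_Factorial.to_fract_def)

lemma tf_simps[simp]: "Defs.to_fract (0::'a::idom) = 0" "Defs.to_fract (1::'a) = 1"
  "Defs.to_fract ((x::'a) * y) = Defs.to_fract x * Defs.to_fract y"
  "(Defs.to_fract (x::'a) = 0) = (x = 0)"
  by (simp_all add: tf_eq)

lemma tf_det: "det (map_mat Defs.to_fract (M :: 'a::idom mat)) = Defs.to_fract (det M)"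
proof -
  interpret inj_comm_ring_hom "Defs.to_fract :: 'a \<Rightarrow> 'a fract" by (unfold_locales, auto simp: tf_eq)
  show ?thesis by (rule hom_det)
qed

lemma tf_alpha: fixes A :: "'a::idom mat"
  assumes A: "A \<in> carrier_mat n n" and i: "i \<le> n" and j: "j \<le> n"
  shows "Defs.to_fract (alpha A k i j) = alpha (map_mat Defs.to_fract A) k i j"
proof (cases "k = 0 \<or> i < k \<or> j < k")
  case True thus ?thesis by (auto simp: alpha_def)
next
  case False
  have "map_mat Defs.to_fract (mat k k (\<lambda>(p, q). A $$ (if p < k - 1 then p else i - 1, if q < k - 1 then q else j - 1)))
    = mat k k (\<lambda>(p, q). map_mat Defs.to_fract A $$ (if p < k - 1 then p else i - 1, if q < k - 1 then q else j - 1))"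
    using False A i j by (intro eq_matI, auto)
  thus ?thesis using False by (simp add: alpha_def tf_det[symmetric])
qed

lemma tf_alpha_lead: fixes A :: "'a::idom mat"
  assumes A: "A \<in> carrier_mat n n" and k: "k \<le> n"
  shows "Defs.to_fract (alpha_lead A k) = alpha_lead (map_mat Defs.to_fract A) k"
  using tf_alpha[OF A k k] by (simp add: alpha_lead_def)

lemma tri_inv: fixes M :: "'b::field mat"
  assumes M: "M \<in> carrier_mat n n" and tri: "upper_triangular M \<or> lower_triangular M"
    and d: "\<And>i. i < n \<Longrightarrow> M $$ (i,i) \<noteq> 0"
  shows "invertible_mat M"
proof -
  have "det M = prod_list (diag_mat M)"
  proof (cases "upper_triangular M")
    case True thus ?thesis by (rule det_upper_triangular[OF _ M])
  next
    case False
    hence "lower_triangular M" using tri by auto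
    thus ?thesis using M by (intro det_lower_triangular[OF _ M], auto simp: lower_triangular_def)
  qed
  also have "\<dots> = (\<Prod>i = 0 ..< n. M $$ (i,i))" using M by (simp add: prod_list_diag_prod)
  finally have "det M \<noteq> 0" using d by simp
  from det_non_zero_imp_unit[OF M this, of "()"]
  obtain B where B: "B \<in> carrier_mat n n" "B * M = 1\<^sub>m n" "M * B = 1\<^sub>m n"
    unfolding Units_def ring_mat_def by auto
  thus ?thesis using M unfolding invertible_mat_def inverts_mat_def by (intro conjI exI[of _ B], auto)
qed

lemma flip_left: fixes X :: "'b::semiring_1 mat"
  assumes X: "X \<in> carrier_mat n nc" and i: "i < n" and j: "j < nc"
  shows "(flip_mat n * X) $$ (i,j) = X $$ (n-1-i, j)"
proof -
  have "(flip_mat n * X) $$ (i,j) = (\<Sum>k<n. (if k = n-1-i then 1 else 0) * X $$ (k,j))"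
    using X i j by (auto simp: flip_mat_def scalar_prod_def intro!: sum.cong)
  also have "\<dots> = (\<Sum>k<n. if k = n-1-i then X $$ (n-1-i, j) else 0)" by (rule sum.cong, auto)
  also have "\<dots> = X $$ (n-1-i, j)" using i by simp
  finally show ?thesis .
qed

lemma flip_right: fixes X :: "'b::semiring_1 mat"
  assumes X: "X \<in> carrier_mat nr n" and i: "i < nr" and j: "j < n"
  shows "(X * flip_mat n) $$ (i,j) = X $$ (i, n-1-j)"
proof -
  have "(X * flip_mat n) $$ (i,j) = (\<Sum>k<n. X $$ (i,k) * (if k = n-1-j then 1 else 0))"
    using X i j by (auto simp: flip_mat_def scalar_prod_def intro!: sum.cong)
  also have "\<dots> = (\<Sum>k<n. if k = n-1-j then X $$ (i, n-1-j) else 0)" by (rule sum.cong, auto)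
  also have "\<dots> = X $$ (i, n-1-j)" using j by simp
  finally show ?thesis .
qed

lemma mult_entry: "X \<in> carrier_mat n m \<Longrightarrow> Y \<in> carrier_mat m k \<Longrightarrow> i < n \<Longrightarrow> j < k \<Longrightarrow>
  (X * Y) $$ (i,j) = (\<Sum>l<m. X $$ (i,l) * Y $$ (l,j))"
  by (auto simp: scalar_prod_def intro!: sum.cong)

lemma sum_if_less: "r \<le> (n::nat) \<Longrightarrow> (\<Sum>l<n. if l < r then f l else 0) = (\<Sum>l<r. f l)"
  by (rule sum.mono_neutral_cong_right, auto)

theorem corollary2:
  fixes A :: "'a::idom mat" and n r :: nat
  assumes "A \<in> carrier_mat n n"
    and "vec_space.rank n (map_mat to_fract A) = r"
    and "r \<ge> 1"
    and "\<forall>i\<in>{1..r}. alpha_lead A i \<noteq> 0"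
  defines "L \<equiv> map_mat to_fract (L_mat n r A)"
    and "U \<equiv> map_mat to_fract (U_mat n r A)"
    and "D \<equiv> D_mat n r A"
    and "S \<equiv> (flip_mat n :: 'a fract mat)"
  shows "map_mat to_fract A = L * D * U
    \<and> invertible_mat L \<and> lower_triangular L
    \<and> invertible_mat U \<and> upper_triangular U
    \<and> invertible_mat (S * L * S) \<and> upper_triangular (S * L * S)
    \<and> S * map_mat to_fract A = (S * L * S) * (S * D) * U
    \<and> perm_type (S * D)"
proof -
  note A = assms(1)
  define Af where "Af = map_mat to_fract A"
  have cAf: "Af \<in> carrier_mat n n" unfolding Af_def using A by simp
  have rk: "vec_space.rank n Af = r" unfolding Af_def by (rule assms(2))
  have rn: "r \<le> n" using vec_space.rank_le_nc[OF cAf] rk by simp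
  have nz: "\<forall>k\<in>{1..r}. alpha_lead Af k \<noteq> 0"
  proof
    fix k assume k: "k \<in> {1..r}"
    have "alpha_lead Af k = to_fract (alpha_lead A k)" unfolding Af_def
      using tf_alpha_lead[OF A, of k] k rn by simp
    thus "alpha_lead Af k \<noteq> 0" using assms(4) k by simp
  qed
  define dd where "dd = (\<lambda>l. inverse (alpha_lead Af l * alpha_lead Af (l+1)))"
  have cL: "L \<in> carrier_mat n n" unfolding assms(5) L_mat_def by simp
  have cU: "U \<in> carrier_mat n n" unfolding assms(6) U_mat_def by simp
  have cD: "D \<in> carrier_mat n n" unfolding assms(7) D_mat_def by simp
  have cS: "S \<in> carrier_mat n n" unfolding assms(8) flip_mat_def by simp
  have Le: "L $$ (i,k) = (if k < r then alpha Af (k+1) (i+1) (k+1) else if i = k then 1 else 0)"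
    if "i < n" "k < n" for i k
    using that rn unfolding assms(5) L_mat_def Af_def by (auto simp: tf_alpha[OF A])
  have Ue: "U $$ (k,j) = (if k < r then alpha Af (k+1) (k+1) (j+1) else if k = j then 1 else 0)"
    if "k < n" "j < n" for k j
    using that rn unfolding assms(6) U_mat_def Af_def by (auto simp: tf_alpha[OF A])
  have De: "D $$ (k,l) = (if k = l \<and> k < r then dd k else 0)"
    if "k < n" "l < n" for k l
  proof -
    have "k < r \<Longrightarrow> to_fract (alpha_lead A k * alpha_lead A (k+1)) = alpha_lead Af k * alpha_lead Af (k+1)"
      using tf_alpha_lead[OF A, of k] tf_alpha_lead[OF A, of "k+1"] rn unfolding Af_def by simp
    thus ?thesis using that unfolding assms(7) D_mat_def dd_def by (auto simp del: tf_simps)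
  qed
  have LDe: "(L * D) $$ (i,l) = (if l < r then L $$ (i,l) * dd l else 0)" if i: "i < n" and l: "l < n" for i l
  proof -
    have "(L * D) $$ (i,l) = (\<Sum>k<n. L $$ (i,k) * D $$ (k,l))"
      using cL cD i l by (auto simp: scalar_prod_def intro!: sum.cong)
    also have "\<dots> = (\<Sum>k<n. if k = l then (if l < r then L $$ (i,l) * dd l else 0) else 0)"
      by (rule sum.cong, auto simp: De l)
    also have "\<dots> = (if l < r then L $$ (i,l) * dd l else 0)" using l by simp
    finally show ?thesis .
  qed
  have cLD: "L * D \<in> carrier_mat n n" using cL cD by simp
  have LDUe: "(L * D * U) $$ (i,j) = (\<Sum>l<r. alpha Af (l+1) (i+1) (l+1) * dd l * alpha Af (l+1) (l+1) (j+1))"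
    if i: "i < n" and j: "j < n" for i j
  proof -
    have "(L * D * U) $$ (i,j) = (\<Sum>l<n. (L * D) $$ (i,l) * U $$ (l,j))"
      by (rule mult_entry[OF cLD cU i j])
    also have "\<dots> = (\<Sum>l<n. if l < r then alpha Af (l+1) (i+1) (l+1) * dd l * alpha Af (l+1) (l+1) (j+1) else 0)"
      by (rule sum.cong, auto simp: LDe Le Ue i j)
    also have "\<dots> = (\<Sum>l<r. alpha Af (l+1) (i+1) (l+1) * dd l * alpha Af (l+1) (l+1) (j+1))"
      by (rule sum_if_less[OF rn])
    finally show ?thesis .
  qed
  have Afe: "Af $$ (i,j) = (\<Sum>l<r. alpha Af (l+1) (i+1) (l+1) * dd l * alpha Af (l+1) (l+1) (j+1))"
    if i: "i < n" and j: "j < n" for i j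
  proof -
    have t: "Af$$(i+1-1,j+1-1) - (\<Sum>k\<in>{1..r}. alpha Af k (i+1) k * alpha Af k k (j+1) / (alpha_lead Af (k-1) * alpha_lead Af k))
     = alpha Af (r+1) (i+1) (j+1) / alpha_lead Af r"
      by (rule telescope[OF nz], auto)
    have z: "alpha Af (r+1) (i+1) (j+1) = 0" by (rule alpha_rank_zero[OF cAf rk], insert i j, auto)
    have "Af $$ (i,j) = (\<Sum>k\<in>{Suc 0..r}. alpha Af k (i+1) k * alpha Af k k (j+1) / (alpha_lead Af (k-1) * alpha_lead Af k))"
      using t z by simp
    also have "\<dots> = (\<Sum>l<r. alpha Af (Suc l) (i+1) (Suc l) * alpha Af (Suc l) (Suc l) (j+1) / (alpha_lead Af l * alpha_lead Af (Suc l)))"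
      by (subst sum.atLeast1_atMost_eq, simp)
    also have "\<dots> = (\<Sum>l<r. alpha Af (l+1) (i+1) (l+1) * dd l * alpha Af (l+1) (l+1) (j+1))"
      by (rule sum.cong, auto simp: dd_def divide_inverse ac_simps)
    finally show ?thesis .
  qed
  have eq1: "Af = L * D * U"
  proof (rule eq_matI)
    fix i j assume "i < dim_row (L * D * U)" "j < dim_col (L * D * U)"
    hence i: "i < n" and j: "j < n" using cLD cU by auto
    show "Af $$ (i,j) = (L * D * U) $$ (i,j)" unfolding LDUe[OF i j] Afe[OF i j] ..
  qed (insert cAf cLD cU, auto)
  have cSL: "S * L \<in> carrier_mat n n" using cS cL by simp
  have SLSe: "(S * L * S) $$ (i,j) = L $$ (n-1-i, n-1-j)" if "i < n" "j < n" for i j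
    using that cSL cL unfolding assms(8) by (simp add: flip_right flip_left)
  have cSLS: "S * L * S \<in> carrier_mat n n" using cSL cS by simp
  have SS: "S * S = 1\<^sub>m n"
  proof (rule eq_matI)
    fix i j assume "i < dim_row (1\<^sub>m n :: 'a fract mat)" "j < dim_col (1\<^sub>m n :: 'a fract mat)"
    hence i: "i < n" and j: "j < n" by auto
    have "(S * S) $$ (i,j) = S $$ (n-1-i,j)" using flip_left[OF cS[unfolded assms(8)] i j] unfolding assms(8) .
    thus "(S * S) $$ (i,j) = 1\<^sub>m n $$ (i,j)" using i j by (auto simp: assms(8) flip_mat_def)
  qed (insert cS, auto)
  have Ldiag: "L $$ (i,i) \<noteq> 0" if "i < n" for i
  proof (cases "i < r")
    case True
    hence "alpha_lead Af (i+1) \<noteq> 0" using nz by auto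
    thus ?thesis using True that by (simp add: Le alpha_lead_def)
  qed (insert that, simp add: Le)
  have Udiag: "U $$ (i,i) \<noteq> 0" if "i < n" for i
  proof (cases "i < r")
    case True
    hence "alpha_lead Af (i+1) \<noteq> 0" using nz by auto
    thus ?thesis using True that by (simp add: Ue alpha_lead_def)
  qed (insert that, simp add: Ue)
  have lowL: "lower_triangular L"
    unfolding lower_triangular_def using cL by (auto simp: Le alpha_def)
  have upU: "upper_triangular U"
    unfolding upper_triangular_def using cU by (auto simp: Ue alpha_def)
  have upSLS: "upper_triangular (S * L * S)"
    unfolding upper_triangular_def
  proof (intro allI impI)
    fix i j assume i: "i < dim_row (S * L * S)" and j: "j < i"
    hence i: "i < n" using cSLS cS by simp
    with j have "n-1-i < n-1-j" "n-1-j < n" by auto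
    thus "(S * L * S) $$ (i,j) = 0" using lowL cL i j
      by (simp add: SLSe lower_triangular_def)
  qed
  have invL: "invertible_mat L" by (rule tri_inv[OF cL], insert lowL Ldiag, auto)
  have invU: "invertible_mat U" by (rule tri_inv[OF cU], insert upU Udiag, auto)
  have invSLS: "invertible_mat (S * L * S)"
    by (rule tri_inv[OF cSLS], insert upSLS Ldiag, auto simp: SLSe)
  have eq2: "S * Af = (S * L * S) * (S * D) * U"
  proof -
    have "(S * L * S) * (S * D) = S * L * (S * (S * D))"
      using cSL cS cD by (simp add: assoc_mult_mat[of _ n n _ n _ n])
    also have "S * (S * D) = S * S * D" using cS cD by (simp add: assoc_mult_mat[of _ n n _ n _ n])
    also have "\<dots> = D" using cD by (simp add: SS)
    finally have 1: "(S * L * S) * (S * D) = S * L * D" .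
    have "S * Af = S * (L * D * U)" using eq1 by simp
    also have "\<dots> = S * (L * D) * U" using cS cLD cU by (simp add: assoc_mult_mat[of _ n n _ n _ n])
    also have "S * (L * D) = S * L * D" using cS cL cD by (simp add: assoc_mult_mat[of _ n n _ n _ n])
    finally show ?thesis unfolding 1 .
  qed
  have SDe: "(S * D) $$ (i,j) = (if n-1-i = j \<and> j < r then dd j else 0)" if "i < n" "j < n" for i j
    using that cD unfolding assms(8) by (simp add: flip_left De)
  have pt: "perm_type (S * D)"
  proof -
    have dSD: "dim_row (S * D) = n" "dim_col (S * D) = n" using cS cD by auto
    show ?thesis unfolding perm_type_def dSD
    proof (intro conjI allI impI)
      fix i j1 j2 assume i: "i < n" and j1: "j1 < n" and j2: "j2 < n"
        and h1: "(S * D) $$ (i, j1) \<noteq> 0" and h2: "(S * D) $$ (i, j2) \<noteq> 0"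
      from h1 h2 show "j1 = j2" unfolding SDe[OF i j1] SDe[OF i j2] by (auto split: if_splits)
    next
      fix j i1 i2 assume j: "j < n" and i1: "i1 < n" and i2: "i2 < n"
        and h1: "(S * D) $$ (i1, j) \<noteq> 0" and h2: "(S * D) $$ (i2, j) \<noteq> 0"
      from h1 h2 show "i1 = i2" unfolding SDe[OF i1 j] SDe[OF i2 j] using i1 i2 by (auto split: if_splits)
    qed
  qed
  show ?thesis using eq1 eq2 invL lowL invU upU invSLS upSLS pt unfolding Af_def by simp
qed

end
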